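(* Let $X,Y$ be Banach spaces, let $F:X\rightrightarrows Y$ be a closed convex set-valued mapping, let $A\subset X$ be a closed convex set, let $\bar y\in Y$, put $S:=F^{-1}(\bar y)\cap A$, and let $\bar x\in S$. Then $$\frac{1}{{\rm ssubreg}_AF(\bar x,\bar y)}=\sup\{\eta>0:\ DF^{-1}(\bar y,\bar x)(\eta_1B_Y)\cap(T(A,\bar x)+\eta_2B_X)\subset B_X\ \text{for all }\eta_1,\eta_2\ge0\text{ with }\eta_1+\eta_2<\eta\}.$$
   Context: $B_X,B_Y$ are the closed unit balls; $B(x,\delta)$ is the open ball. $F$ closed convex means ${\rm gph}(F)=\{(x,y):y\in F(x)\}$ is closed and convex in $X\times Y$. For a closed convex set $C$ and $a\in C$, the contingent cone $T(C,a)$ is the set of $v$ for which there exist $v_n\to v$, $t_n\to0^+$ with $a+t_nv_n\in C$ for all $n$. For $(x,y)\in{\rm gph}(F)$, $DF^{-1}(y,x)(v):=\{u\in X:(u,v)\in T({\rm gph}(F),(x,y))\}$ and $DF^{-1}(y,x)(W)=\bigcup_{v\in W}DF^{-1}(y,x)(v)$ for $W\subset Y$. The modulus of strong metric subregularity is ${\rm ssubreg}_AF(\bar x,\bar y):=\inf\{\tau>0:\exists\delta>0$ such that $\|x-\bar x\|\le\tau(d(\bar y,F(x))+d(x,A))$ for all $x\in B(\bar x,\delta)\}$, with $\inf\emptyset=+\infty$, $\sup\emptyset=0$, $1/(+\infty)=0$, $1/0=+\infty$. *)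

theory Defs
  imports "HOL-Analysis.Analysis"
begin

definition gph :: "('a \<Rightarrow> 'b set) \<Rightarrow> ('a \<times> 'b) set" where
  "gph F = {(x, y). y \<in> F x}"

definition contingent_cone :: "'a::real_normed_vector set \<Rightarrow> 'a \<Rightarrow> 'a set" where
  "contingent_cone C a = {v. \<exists>vs ts. vs \<longlonglongrightarrow> v \<and> ts \<longlonglongrightarrow> 0 \<and> (\<forall>n. ts n > (0::real))
        \<and> (\<forall>n. a + ts n *\<^sub>R vs n \<in> C)}"

definition DFinv :: "('a::real_normed_vector \<Rightarrow> 'b::real_normed_vector set) \<Rightarrow> 'b \<Rightarrow> 'a \<Rightarrow> 'b \<Rightarrow> 'a set" where
  "DFinv F y x v = {u. (u, v) \<in> contingent_cone (gph F) (x, y)}"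

definition DFinv_set :: "('a::real_normed_vector \<Rightarrow> 'b::real_normed_vector set) \<Rightarrow> 'b \<Rightarrow> 'a \<Rightarrow> 'b set \<Rightarrow> 'a set" where
  "DFinv_set F y x W = (\<Union>v\<in>W. DFinv F y x v)"

text \<open>Distance from a point to a set with the convention d(y, {}) = +infinity
  (Isabelle's infdist gives 0 on the empty set, so we use ereal).\<close>
definition dist_set :: "'a::metric_space \<Rightarrow> 'a set \<Rightarrow> ereal" where
  "dist_set y S = (if S = {} then \<infinity> else ereal (infdist y S))"

definition ssubreg :: "('a::real_normed_vector \<Rightarrow> 'b::real_normed_vector set) \<Rightarrow> 'a set \<Rightarrow> 'a \<Rightarrow> 'b \<Rightarrow> ereal" where
  "ssubreg F A xb yb = Inf {ereal \<tau> | \<tau>. \<tau> > 0 \<and> (\<exists>\<delta>>0. \<forall>x\<in>ball xb \<delta>.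
        ereal (norm (x - xb)) \<le> ereal \<tau> * (dist_set yb (F x) + dist_set x A))}"

definition recip :: "ereal \<Rightarrow> ereal" where
  "recip e = (if e = 0 then \<infinity> else if e = \<infinity> then 0 else ereal (1 / real_of_ereal e))"

definition sup0 :: "real set \<Rightarrow> ereal" where
  "sup0 S = (if S = {} then 0 else Sup (ereal ` S))"

end

theory Submission
  imports Defs
begin

lemma infdist_approx:
  assumes "A \<noteq> {}" "e > 0" shows "\<exists>a\<in>A. dist x a < infdist x A + e"
proof (rule ccontr)
  assume "\<not> ?thesis"
  then have "\<forall>a\<in>A. infdist x A + e \<le> dist x a" by auto
  then have "infdist x A + e \<le> infdist x A"
    unfolding infdist_notempty[OF assms(1)] by (intro cINF_greatest assms) auto
  with assms show False by simp
qed

lemma recip_inf: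
  assumes pos: "\<forall>\<tau>\<in>S. (\<tau>::real) > 0"
  shows "recip (Inf (ereal ` S)) = sup0 ((\<lambda>\<tau>. 1/\<tau>) ` S)"
proof (cases "S = {}")
  case True then show ?thesis by (simp add: recip_def sup0_def top_ereal_def)
next
  case ne: False
  define m where "m = Inf (ereal ` S)"
  have m0: "m \<ge> 0" unfolding m_def by (rule Inf_greatest) (use pos in auto)
  from ne obtain \<tau>0 where t0: "\<tau>0 \<in> S" by auto
  have "m \<le> ereal \<tau>0" unfolding m_def using t0 by (auto intro: Inf_lower)
  then have mfin: "m < \<infinity>" by auto
  have ub: "ereal (1/\<tau>) \<le> Sup (ereal ` (\<lambda>\<tau>. 1/\<tau>) ` S)" if "\<tau> \<in> S" for \<tau>
    using that by (auto intro!: Sup_upper)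
  show ?thesis
  proof (cases "m = 0")
    case True
    have "Sup (ereal ` (\<lambda>\<tau>. 1/\<tau>) ` S) = \<infinity>"
    proof (rule ccontr)
      assume nI: "Sup (ereal ` (\<lambda>\<tau>. 1/\<tau>) ` S) \<noteq> \<infinity>"
      have "Sup (ereal ` (\<lambda>\<tau>. 1/\<tau>) ` S) \<ge> ereal (1/\<tau>0)" using ub t0 by auto
      with nI obtain r where r: "Sup (ereal ` (\<lambda>\<tau>. 1/\<tau>) ` S) = ereal r"
        by (cases "Sup (ereal ` (\<lambda>\<tau>. 1/\<tau>) ` S)") auto
      define M where "M = max r 1"
      have "m < ereal (1/M)" using True M_def by auto
      then obtain \<tau> where t: "\<tau> \<in> S" "ereal \<tau> < ereal (1/M)"
        unfolding m_def by (auto simp: Inf_less_iff)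
      have M0: "M > 0" unfolding M_def by auto
      have "\<tau> < 1/M" using t by simp
      then have "M < 1/\<tau>" using pos t(1) M0 by (simp add: field_simps)
      moreover have "1/\<tau> \<le> r" using ub[OF t(1)] r by auto
      ultimately show False unfolding M_def by auto
    qed
    then show ?thesis using True ne by (simp add: recip_def sup0_def m_def)
  next
    case False
    with m0 mfin obtain r where r: "m = ereal r" "r > 0"
      by (cases m) auto
    have le: "Sup (ereal ` (\<lambda>\<tau>. 1/\<tau>) ` S) \<le> ereal (1/r)"
    proof (rule Sup_least)
      fix z assume "z \<in> ereal ` (\<lambda>\<tau>. 1/\<tau>) ` S"
      then obtain \<tau> where t: "\<tau> \<in> S" "z = ereal (1/\<tau>)" by auto
      have "ereal r \<le> ereal \<tau>" using t(1) r unfolding m_def by (metis INF_lower)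
      then show "z \<le> ereal (1/r)" using t r by (auto simp: frac_le)
    qed
    have ge: "ereal (1/r) \<le> Sup (ereal ` (\<lambda>\<tau>. 1/\<tau>) ` S)"
    proof (rule ccontr)
      assume "\<not> ?thesis"
      then have lt: "Sup (ereal ` (\<lambda>\<tau>. 1/\<tau>) ` S) < ereal (1/r)" by auto
      then obtain z where z: "Sup (ereal ` (\<lambda>\<tau>. 1/\<tau>) ` S) < z" "z < ereal (1/r)"
        using dense by blast
      have p: "ereal (1/\<tau>0) > 0" using pos t0 by auto
      have "z > 0" using less_trans[OF less_le_trans[OF p ub[OF t0]] z(1)] .
      with z(2) obtain q where q: "z = ereal q" "q > 0" "q < 1/r" by (cases z) auto
      have "r < 1/q" using r q by (simp add: field_simps)
      then have "m < ereal (1/q)" using r by simp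
      then obtain \<tau> where t: "\<tau> \<in> S" "\<tau> < 1/q" unfolding m_def by (auto simp: Inf_less_iff)
      then have "q < 1/\<tau>" using pos q by (simp add: field_simps)
      then have "ereal q < ereal (1/\<tau>)" by simp
      with ub[OF t(1)] z(1) q show False by (metis less_le_trans less_asym)
    qed
    show ?thesis using le ge r ne False by (simp add: recip_def sup0_def m_def[symmetric] antisym)
  qed
qed


lemma cc_scale:
  assumes "v \<in> contingent_cone C a" "c > 0"
  shows "c *\<^sub>R v \<in> contingent_cone C a"
proof -
  from assms(1) obtain vs ts where h: "vs \<longlonglongrightarrow> v" "ts \<longlonglongrightarrow> 0" "\<forall>n. ts n > (0::real)"
     "\<forall>n. a + ts n *\<^sub>R vs n \<in> C" unfolding contingent_cone_def by blast
  have "(\<lambda>n. c *\<^sub>R vs n) \<longlonglongrightarrow> c *\<^sub>R v" using h(1) by (intro tendsto_intros)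
  moreover have "(\<lambda>n. ts n / c) \<longlonglongrightarrow> 0" using tendsto_divide_zero[OF h(2)] .
  moreover have "\<forall>n. ts n / c > 0" using h(3) assms(2) by auto
  moreover have "\<forall>n. a + (ts n / c) *\<^sub>R (c *\<^sub>R vs n) \<in> C" using h(4) assms(2) by simp
  ultimately show ?thesis unfolding contingent_cone_def by blast
qed

lemma cc_convex:
  assumes "convex C" "a \<in> C" "c \<in> C"
  shows "c - a \<in> contingent_cone C a"
proof -
  define ts where "ts = (\<lambda>n. inverse (real (Suc n)))"
  have "ts \<longlonglongrightarrow> 0" unfolding ts_def by (rule LIMSEQ_inverse_real_of_nat)
  moreover have "\<forall>n. ts n > 0" unfolding ts_def by auto
  moreover have "\<forall>n. a + ts n *\<^sub>R (c - a) \<in> C"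
  proof
    fix n
    have "ts n \<le> 1" unfolding ts_def by (simp add: field_simps)
    then have "(1 - ts n) *\<^sub>R a + ts n *\<^sub>R c \<in> C"
      using convexD_alt[OF assms, of "ts n"] \<open>\<forall>n. ts n > 0\<close> less_imp_le by blast
    then show "a + ts n *\<^sub>R (c - a) \<in> C" by (simp add: algebra_simps)
  qed
  ultimately show ?thesis unfolding contingent_cone_def
    by (intro CollectI exI[of _ "\<lambda>n. c - a"] exI[of _ ts]) auto
qed

lemma conv_small:
  assumes "convex A" "a \<in> A" "a + s *\<^sub>R w \<in> A" "0 < t" "t \<le> s"
  shows "a + t *\<^sub>R w \<in> A"
proof -
  have "(1 - t/s) *\<^sub>R a + (t/s) *\<^sub>R (a + s *\<^sub>R w) \<in> A"
    using convexD_alt[OF assms(1-3), of "t/s"] assms(4,5) by auto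
  moreover have "(1 - t/s) *\<^sub>R a + (t/s) *\<^sub>R (a + s *\<^sub>R w) = a + t *\<^sub>R w"
    using assms(4,5) by (simp add: algebra_simps)
  ultimately show ?thesis by simp
qed

lemma H_real:
  assumes "\<forall>x\<in>ball xb \<delta>. ereal (norm (x - xb)) \<le> ereal \<tau> * (dist_set yb (F x) + dist_set x A)"
    "\<tau> > 0" "x \<in> ball xb \<delta>" "y \<in> F x" "a \<in> A"
  shows "norm (x - xb) \<le> \<tau> * (dist yb y + dist x a)"
proof -
  have "ereal (norm (x - xb)) \<le> ereal \<tau> * (ereal (infdist yb (F x)) + ereal (infdist x A))"
  proof -
    have "F x \<noteq> {}" "A \<noteq> {}" using assms(4,5) by auto
    moreover have "ereal (norm (x - xb)) \<le> ereal \<tau> * (dist_set yb (F x) + dist_set x A)"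
      using assms(1,3) by blast
    ultimately show ?thesis unfolding dist_set_def by simp
  qed
  then have "norm (x - xb) \<le> \<tau> * (infdist yb (F x) + infdist x A)" by simp
  also have "\<dots> \<le> \<tau> * (dist yb y + dist x a)"
    using assms(2,4,5) by (intro mult_left_mono add_mono infdist_le) auto
  finally show ?thesis .
qed


lemma L1:
  fixes F :: "'a::real_normed_vector \<Rightarrow> 'b::real_normed_vector set"
  assumes cA: "convex A" and xbA: "xb \<in> A" and tau: "\<tau> > 0" and del: "\<delta> > 0"
    and H: "\<forall>x\<in>ball xb \<delta>. ereal (norm (x - xb)) \<le> ereal \<tau> * (dist_set yb (F x) + dist_set x A)"
    and uv: "(u, v) \<in> contingent_cone (gph F) (xb, yb)" and tT: "t \<in> contingent_cone A xb"
  shows "norm u \<le> \<tau> * (norm v + norm (u - t))"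
proof -
  from uv obtain us ts where g: "us \<longlonglongrightarrow> (u, v)" "ts \<longlonglongrightarrow> 0" "\<forall>n. ts n > (0::real)"
     "\<forall>n. (xb, yb) + ts n *\<^sub>R us n \<in> gph F" unfolding contingent_cone_def by blast
  from tT obtain ws ss where a: "ws \<longlonglongrightarrow> t" "ss \<longlonglongrightarrow> 0" "\<forall>n. ss n > (0::real)"
     "\<forall>n. xb + ss n *\<^sub>R ws n \<in> A" unfolding contingent_cone_def by blast
  have fu: "(\<lambda>n. fst (us n)) \<longlonglongrightarrow> u" using tendsto_fst[OF g(1)] by simp
  have sv: "(\<lambda>n. snd (us n)) \<longlonglongrightarrow> v" using tendsto_snd[OF g(1)] by simp
  have tu: "(\<lambda>n. ts n *\<^sub>R fst (us n)) \<longlonglongrightarrow> 0"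
    using tendsto_scaleR[OF g(2) fu] by simp
  show ?thesis
  proof (rule field_le_epsilon)
    fix e :: real assume e: "e > 0"
    define \<epsilon> where "\<epsilon> = e / (1 + 3 * \<tau>)"
    have ep: "\<epsilon> > 0" unfolding \<epsilon>_def using e tau by auto
    have ee: "\<epsilon> * (1 + 3 * \<tau>) = e" unfolding \<epsilon>_def using tau by auto
    from tendstoD[OF a(1) ep] obtain k where k: "dist (ws k) t < \<epsilon>"
      unfolding eventually_sequentially by auto
    have "\<forall>\<^sub>F n in sequentially. dist (ts n) 0 < ss k" using tendstoD[OF g(2)] a(3) by blast
    moreover have "\<forall>\<^sub>F n in sequentially. dist (ts n *\<^sub>R fst (us n)) 0 < \<delta>"
      using tendstoD[OF tu del] .
    moreover have "\<forall>\<^sub>F n in sequentially. dist (fst (us n)) u < \<epsilon>" using tendstoD[OF fu ep] .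
    moreover have "\<forall>\<^sub>F n in sequentially. dist (snd (us n)) v < \<epsilon>" using tendstoD[OF sv ep] .
    ultimately have "\<forall>\<^sub>F n in sequentially. dist (ts n) 0 < ss k \<and> dist (ts n *\<^sub>R fst (us n)) 0 < \<delta>
       \<and> dist (fst (us n)) u < \<epsilon> \<and> dist (snd (us n)) v < \<epsilon>"
      by eventually_elim auto
    then obtain n where n: "dist (ts n) 0 < ss k" "dist (ts n *\<^sub>R fst (us n)) 0 < \<delta>"
       "dist (fst (us n)) u < \<epsilon>" "dist (snd (us n)) v < \<epsilon>"
      unfolding eventually_sequentially by auto
    define un where "un = fst (us n)"
    define vn where "vn = snd (us n)"
    define s where "s = ts n"
    have s0: "s > 0" unfolding s_def using g(3) by auto
    have sk: "s \<le> ss k" using n(1) s0 unfolding s_def by simp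
    have inA: "xb + s *\<^sub>R ws k \<in> A" using conv_small[OF cA xbA a(4)[rule_format, of k] s0 sk] .
    have gp: "(xb, yb) + s *\<^sub>R (un, vn) \<in> gph F" using g(4) unfolding s_def un_def vn_def by simp
    then have inF: "yb + s *\<^sub>R vn \<in> F (xb + s *\<^sub>R un)" unfolding gph_def by simp
    have inB: "xb + s *\<^sub>R un \<in> ball xb \<delta>" using n(2) unfolding s_def un_def by (simp add: dist_norm)
    have "norm ((xb + s *\<^sub>R un) - xb) \<le> \<tau> * (dist yb (yb + s *\<^sub>R vn) + dist (xb + s *\<^sub>R un) (xb + s *\<^sub>R ws k))"
      by (rule H_real[OF H tau inB inF inA])
    then have "s * norm un \<le> \<tau> * (s * norm vn + s * norm (un - ws k))"
      using s0 by (simp add: dist_norm scaleR_diff_right[symmetric])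
    then have "s * norm un \<le> s * (\<tau> * (norm vn + norm (un - ws k)))" by (simp add: algebra_simps)
    then have main: "norm un \<le> \<tau> * (norm vn + norm (un - ws k))" using s0 by simp
    have d1: "norm u \<le> norm un + \<epsilon>"
    proof -
      have "norm u \<le> norm un + norm (u - un)" by (rule norm_triangle_sub)
      moreover have "norm (u - un) < \<epsilon>" using n(3) unfolding un_def dist_norm
        by (simp add: norm_minus_commute)
      ultimately show ?thesis by linarith
    qed
    have d2: "norm vn \<le> norm v + \<epsilon>"
    proof -
      have "norm vn \<le> norm v + norm (vn - v)" by (rule norm_triangle_sub)
      moreover have "norm (vn - v) < \<epsilon>" using n(4) unfolding vn_def dist_norm .
      ultimately show ?thesis by linarith
    qed
    have d3: "norm (un - ws k) \<le> norm (u - t) + 2 * \<epsilon>"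
    proof -
      have eq: "un - ws k = (un - u) + (u - t) + (t - ws k)" by simp
      have "norm ((un - u) + (u - t) + (t - ws k)) \<le> norm ((un - u) + (u - t)) + norm (t - ws k)"
        by (rule norm_triangle_ineq)
      moreover have "norm ((un - u) + (u - t)) \<le> norm (un - u) + norm (u - t)"
        by (rule norm_triangle_ineq)
      ultimately have "norm (un - ws k) \<le> norm (un - u) + norm (u - t) + norm (t - ws k)"
        unfolding eq[symmetric] by linarith
      moreover have "norm (un - u) < \<epsilon>" using n(3) unfolding un_def dist_norm .
      moreover have "norm (t - ws k) < \<epsilon>" using k unfolding dist_norm by (simp add: norm_minus_commute)
      ultimately show ?thesis by simp
    qed
    have "norm u \<le> \<tau> * (norm v + \<epsilon> + (norm (u - t) + 2 * \<epsilon>)) + \<epsilon>"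
    proof -
      have "\<tau> * (norm vn + norm (un - ws k)) \<le> \<tau> * (norm v + \<epsilon> + (norm (u - t) + 2 * \<epsilon>))"
        using tau d2 d3 by (intro mult_left_mono) auto
      then show ?thesis using main d1 by linarith
    qed
    also have "\<dots> = \<tau> * (norm v + norm (u - t)) + \<epsilon> * (1 + 3 * \<tau>)" by (simp add: algebra_simps)
    finally show "norm u \<le> \<tau> * (norm v + norm (u - t)) + e" using ee by simp
  qed
qed


lemma L2:
  fixes F :: "'a::real_normed_vector \<Rightarrow> 'b::real_normed_vector set"
  assumes cG: "convex (gph F)" and cA: "convex A" and xbA: "xb \<in> A" and ybF: "yb \<in> F xb"
    and tau: "\<tau> > 0"
    and P: "\<forall>u v t. (u, v) \<in> contingent_cone (gph F) (xb, yb) \<longrightarrow> t \<in> contingent_cone A xb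
              \<longrightarrow> norm u \<le> \<tau> * (norm v + norm (u - t))"
  shows "\<forall>x\<in>ball xb 1. ereal (norm (x - xb)) \<le> ereal \<tau> * (dist_set yb (F x) + dist_set x A)"
proof
  fix x assume "x \<in> ball xb 1"
  have An: "A \<noteq> {}" using xbA by auto
  show "ereal (norm (x - xb)) \<le> ereal \<tau> * (dist_set yb (F x) + dist_set x A)"
  proof (cases "F x = {}")
    case True then show ?thesis using tau An by (simp add: dist_set_def)
  next
    case Fn: False
    have "norm (x - xb) \<le> \<tau> * (infdist yb (F x) + infdist x A)"
    proof (rule field_le_epsilon)
      fix e :: real assume e: "e > 0"
      have e2: "e / (2 * \<tau>) > 0" using e tau by auto
      obtain y where y: "y \<in> F x" "dist yb y < infdist yb (F x) + e / (2 * \<tau>)"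
        using infdist_approx[OF Fn e2] by blast
      obtain a where a: "a \<in> A" "dist x a < infdist x A + e / (2 * \<tau>)"
        using infdist_approx[OF An e2] by blast
      have "(x, y) \<in> gph F" "(xb, yb) \<in> gph F" using y ybF unfolding gph_def by auto
      from cc_convex[OF cG this(2) this(1)] have "(x - xb, y - yb) \<in> contingent_cone (gph F) (xb, yb)"
        by simp
      moreover have "a - xb \<in> contingent_cone A xb" using cc_convex[OF cA xbA a(1)] .
      ultimately have "norm (x - xb) \<le> \<tau> * (norm (y - yb) + norm ((x - xb) - (a - xb)))"
        using P by blast
      also have "\<dots> = \<tau> * (dist yb y + dist x a)" by (simp add: dist_norm norm_minus_commute)
      also have "\<dots> \<le> \<tau> * (infdist yb (F x) + e / (2 * \<tau>) + (infdist x A + e / (2 * \<tau>)))"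
        using tau y(2) a(2) by (intro mult_left_mono) auto
      also have "\<dots> = \<tau> * (infdist yb (F x) + infdist x A) + e" using tau by (simp add: field_simps)
      finally show "norm (x - xb) \<le> \<tau> * (infdist yb (F x) + infdist x A) + e" .
    qed
    then show ?thesis using Fn An by (simp add: dist_set_def)
  qed
qed

lemma L3:
  fixes F :: "'a::real_normed_vector \<Rightarrow> 'b::real_normed_vector set"
  assumes eta: "\<eta> > 0"
  shows "(\<forall>\<eta>1 \<eta>2. \<eta>1 \<ge> 0 \<and> \<eta>2 \<ge> 0 \<and> \<eta>1 + \<eta>2 < \<eta> \<longrightarrow>
        DFinv_set F yb xb ((\<lambda>v. \<eta>1 *\<^sub>R v) ` cball 0 1)
          \<inter> {t + b | t b. t \<in> contingent_cone A xb \<and> b \<in> (\<lambda>u. \<eta>2 *\<^sub>R u) ` cball 0 1}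
        \<subseteq> cball 0 1) \<longleftrightarrow>
     (\<forall>u v t. (u, v) \<in> contingent_cone (gph F) (xb, yb) \<longrightarrow> t \<in> contingent_cone A xb
              \<longrightarrow> \<eta> * norm u \<le> norm v + norm (u - t))" (is "?L \<longleftrightarrow> ?R")
proof
  assume R: ?R
  show ?L
  proof (intro allI impI subsetI)
    fix \<eta>1 \<eta>2 z
    assume h: "\<eta>1 \<ge> 0 \<and> \<eta>2 \<ge> 0 \<and> \<eta>1 + \<eta>2 < \<eta>"
    assume "z \<in> DFinv_set F yb xb ((\<lambda>v. \<eta>1 *\<^sub>R v) ` cball 0 1)
          \<inter> {t + b | t b. t \<in> contingent_cone A xb \<and> b \<in> (\<lambda>u. \<eta>2 *\<^sub>R u) ` cball 0 1}"
    then obtain w t b where w: "norm w \<le> 1" "(z, \<eta>1 *\<^sub>R w) \<in> contingent_cone (gph F) (xb, yb)"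
      and t: "t \<in> contingent_cone A xb" and b: "norm b \<le> 1" "z = t + \<eta>2 *\<^sub>R b"
      unfolding DFinv_set_def DFinv_def by auto
    have "\<eta> * norm z \<le> norm (\<eta>1 *\<^sub>R w) + norm (z - t)" using R w(2) t by blast
    also have "\<dots> = \<eta>1 * norm w + \<eta>2 * norm b" using h b(2) by simp
    also have "\<dots> \<le> \<eta>1 + \<eta>2" using h w(1) b(1)
      by (intro add_mono) (auto simp: mult_left_le)
    also have "\<dots> < \<eta>" using h by simp
    finally have "\<eta> * norm z < \<eta> * 1" by simp
    then show "z \<in> cball 0 1" using eta by simp
  qed
next
  assume L: ?L
  show ?R
  proof (intro allI impI, rule ccontr)
    fix u v t
    assume uv: "(u, v) \<in> contingent_cone (gph F) (xb, yb)" and tT: "t \<in> contingent_cone A xb"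
    define s where "s = norm v + norm (u - t)"
    assume "\<not> \<eta> * norm u \<le> norm v + norm (u - t)"
    then have su: "s < \<eta> * norm u" unfolding s_def by simp
    have s0: "s \<ge> 0" unfolding s_def by simp
    have den: "\<eta> * norm u + s > 0" using su s0 by linarith
    define l where "l = 2 * \<eta> / (\<eta> * norm u + s)"
    have l0: "l > 0" unfolding l_def using eta den by simp
    have lu: "l * norm u > 1" unfolding l_def using den su eta by (simp add: field_simps)
    have ls: "l * s < \<eta>" unfolding l_def using den su eta by (simp add: field_simps)
    define \<mu> where "\<mu> = (\<eta> - l * s) / 2"
    have mu: "\<mu> > 0" unfolding \<mu>_def using ls by simp
    define \<eta>1 where "\<eta>1 = l * norm v"
    define \<eta>2 where "\<eta>2 = l * norm (u - t) + \<mu>"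
    have h: "\<eta>1 \<ge> 0 \<and> \<eta>2 \<ge> 0 \<and> \<eta>1 + \<eta>2 < \<eta>"
          proof -
      have "l * norm v \<ge> 0" "l * norm (u - t) \<ge> 0" using l0 by auto
      moreover have "l * s = l * norm v + l * norm (u - t)" unfolding s_def by (simp add: algebra_simps)
      moreover have "\<eta>1 + \<eta>2 = l * s + \<mu>" unfolding \<eta>1_def \<eta>2_def s_def by (simp add: algebra_simps)
      moreover have "l * s + \<mu> < \<eta>" unfolding \<mu>_def using ls by (simp add: field_simps)
      ultimately show ?thesis using mu unfolding \<eta>1_def \<eta>2_def by auto
    qed
    have e2: "\<eta>2 > 0" unfolding \<eta>2_def using l0 mu by (simp add: add_nonneg_pos)
    have "(l *\<^sub>R u, l *\<^sub>R v) \<in> contingent_cone (gph F) (xb, yb)"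
      using cc_scale[OF uv l0] by simp
    moreover define w where "w = (if v = 0 then 0 else v /\<^sub>R norm v)"
    moreover have "l *\<^sub>R v = \<eta>1 *\<^sub>R w" "norm w \<le> 1" unfolding w_def \<eta>1_def by auto
    ultimately have z1: "l *\<^sub>R u \<in> DFinv_set F yb xb ((\<lambda>v. \<eta>1 *\<^sub>R v) ` cball 0 1)"
      unfolding DFinv_set_def DFinv_def by auto
    have tl: "l *\<^sub>R t \<in> contingent_cone A xb" using cc_scale[OF tT l0] .
    define X where "X = l *\<^sub>R u - l *\<^sub>R t"
    define b where "b = inverse \<eta>2 *\<^sub>R X"
    have "norm X \<le> \<eta>2"
      unfolding \<eta>2_def X_def using l0 mu by (simp add: scaleR_diff_right[symmetric])
    moreover have "norm b = norm X / \<eta>2" unfolding b_def using e2 by (simp add: divide_inverse_commute)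
    ultimately have "norm b \<le> 1" using e2 by simp
    moreover have "l *\<^sub>R u = l *\<^sub>R t + \<eta>2 *\<^sub>R b" unfolding b_def X_def using e2 by simp
    ultimately have z2: "l *\<^sub>R u \<in> {t + b | t b. t \<in> contingent_cone A xb \<and> b \<in> (\<lambda>u. \<eta>2 *\<^sub>R u) ` cball 0 1}"
      using tl by fastforce
    have "l *\<^sub>R u \<in> cball 0 1" using L h z1 z2 by blast
    then show False using lu l0 by simp
  qed
qed


theorem theorem3p3:
  fixes F :: "'a::banach \<Rightarrow> 'b::banach set"
    and A :: "'a set" and xb :: 'a and yb :: 'b
  assumes "closed (gph F)" and "convex (gph F)"
    and "closed A" and "convex A"
    and "xb \<in> {x. yb \<in> F x} \<inter> A"
  shows "recip (ssubreg F A xb yb) =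
    sup0 {\<eta>. \<eta> > 0 \<and> (\<forall>\<eta>1 \<eta>2. \<eta>1 \<ge> 0 \<and> \<eta>2 \<ge> 0 \<and> \<eta>1 + \<eta>2 < \<eta> \<longrightarrow>
        DFinv_set F yb xb ((\<lambda>v. \<eta>1 *\<^sub>R v) ` cball 0 1)
          \<inter> {t + b | t b. t \<in> contingent_cone A xb \<and> b \<in> (\<lambda>u. \<eta>2 *\<^sub>R u) ` cball 0 1}
        \<subseteq> cball 0 1)}"
proof -
  have cG: "convex (gph F)" and cA: "convex A" and xbA: "xb \<in> A" and ybF: "yb \<in> F xb"
    using assms by auto
  define P where "P = (\<lambda>\<tau>. \<forall>u v t. (u, v) \<in> contingent_cone (gph F) (xb, yb) \<longrightarrow> t \<in> contingent_cone A xb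
              \<longrightarrow> norm u \<le> \<tau> * (norm v + norm (u - t)))"
  define S where "S = {\<tau>. \<tau> > 0 \<and> (\<exists>\<delta>>0. \<forall>x\<in>ball xb \<delta>.
        ereal (norm (x - xb)) \<le> ereal \<tau> * (dist_set yb (F x) + dist_set x A))}"
  have S_eq: "S = {\<tau>. \<tau> > 0 \<and> P \<tau>}"
  proof (intro set_eqI iffI)
    fix \<tau> assume "\<tau> \<in> S"
    then obtain \<delta> where t: "\<tau> > 0" "\<delta> > 0" "\<forall>x\<in>ball xb \<delta>.
        ereal (norm (x - xb)) \<le> ereal \<tau> * (dist_set yb (F x) + dist_set x A)"
      unfolding S_def by auto
    have "P \<tau>" unfolding P_def using L1[OF cA xbA t(1) t(2) t(3)] by blast
    then show "\<tau> \<in> {\<tau>. \<tau> > 0 \<and> P \<tau>}" using t by auto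
  next
    fix \<tau> assume "\<tau> \<in> {\<tau>. \<tau> > 0 \<and> P \<tau>}"
    then have t: "\<tau> > 0" "P \<tau>" by auto
    have "\<forall>x\<in>ball xb 1. ereal (norm (x - xb)) \<le> ereal \<tau> * (dist_set yb (F x) + dist_set x A)"
      using L2[OF cG cA xbA ybF t(1)] t(2) unfolding P_def by blast
    then show "\<tau> \<in> S" unfolding S_def using t(1) by (auto intro: exI[of _ 1])
  qed
  have ss: "ssubreg F A xb yb = Inf (ereal ` S)"
    unfolding ssubreg_def S_def by (rule arg_cong[where f=Inf]) blast
  have G: "{\<eta>. \<eta> > 0 \<and> (\<forall>\<eta>1 \<eta>2. \<eta>1 \<ge> 0 \<and> \<eta>2 \<ge> 0 \<and> \<eta>1 + \<eta>2 < \<eta> \<longrightarrow>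
        DFinv_set F yb xb ((\<lambda>v. \<eta>1 *\<^sub>R v) ` cball 0 1)
          \<inter> {t + b | t b. t \<in> contingent_cone A xb \<and> b \<in> (\<lambda>u. \<eta>2 *\<^sub>R u) ` cball 0 1}
        \<subseteq> cball 0 1)} = (\<lambda>\<tau>. 1/\<tau>) ` S" (is "?G = _")
  proof -
    have Q: "\<eta> \<in> ?G \<longleftrightarrow> \<eta> > 0 \<and> P (1/\<eta>)" for \<eta>
    proof (cases "\<eta> > 0")
      case True
      have "(\<eta> * norm u \<le> norm v + norm (u - t)) \<longleftrightarrow> (norm u \<le> 1/\<eta> * (norm v + norm (u - t)))"
        for u :: 'a and v :: 'b and t
        using True by (simp add: field_simps)
      then show ?thesis using L3[OF True, of F yb xb A] True unfolding P_def by simp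
    qed simp
    show ?thesis
    proof (intro set_eqI iffI)
      fix \<eta> assume "\<eta> \<in> ?G"
      then have "\<eta> > 0" "P (1/\<eta>)" using Q by auto
      then have "1/\<eta> \<in> S" unfolding S_eq by auto
      moreover have "\<eta> = 1/(1/\<eta>)" by simp
      ultimately show "\<eta> \<in> (\<lambda>\<tau>. 1/\<tau>) ` S" by blast
    next
      fix \<eta> assume "\<eta> \<in> (\<lambda>\<tau>. 1/\<tau>) ` S"
      then obtain \<tau> where "\<tau> \<in> S" "\<eta> = 1/\<tau>" by auto
      then show "\<eta> \<in> ?G" unfolding Q S_eq by auto
    qed
  qed
  have pos: "\<forall>\<tau>\<in>S. \<tau> > 0" unfolding S_def by auto
  show ?thesis unfolding ss G using recip_inf[OF pos] .
qed

end
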